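(* Let $\beta\in[0,1]$ and $f\in\mathcal{A}_{\beta}$ with $f(z)=z+\sum_{n=2}^{\infty}a_nz^n$. Then $$|a_3-a_2^2|\le\frac{2}{3-2\beta}.$$ The inequality is sharp, with equality for the function $f_2\in\mathcal{A}_\beta$ defined by $\beta f_2(z)/z+(1-\beta)f_2'(z)=\frac{1+z^2}{1-z^2}$.
   Context: $\mathbb{D}=\{z\in\mathbb{C}:|z|<1\}$. For $\beta\in[0,1]$, $\mathcal{A}_{\beta}$ is the set of analytic functions $f$ on $\mathbb{D}$ with $f(0)=0$, $f'(0)=1$ (so $f(z)=z+\sum_{n\ge2}a_nz^n$) such that $\operatorname{Re}\big(\beta f(z)/z+(1-\beta)f'(z)\big)>0$ for all $z\in\mathbb{D}$. *)

theory Defs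
  imports "HOL-Complex_Analysis.Complex_Analysis"
begin

text \<open>The class A_beta. The quotient f(z)/z is understood for z \<noteq> 0; at z = 0 its
  (removable) value is f'(0) = 1, so the positivity condition there reads 1 > 0 automatically.\<close>
definition A_beta :: "real \<Rightarrow> (complex \<Rightarrow> complex) set" where
  "A_beta \<beta> = {f. f holomorphic_on ball 0 1 \<and> f 0 = 0 \<and> deriv f 0 = 1 \<and>
     (\<forall>z\<in>ball 0 1 - {0}. Re (of_real \<beta> * f z / z + of_real (1 - \<beta>) * deriv f z) > 0)}"

definition taylor_coeff :: "(complex \<Rightarrow> complex) \<Rightarrow> nat \<Rightarrow> complex" where
  "taylor_coeff f n = (deriv ^^ n) f 0 / of_nat (fact n)"

end

theory Submission
  imports Defs
begin


lemma schwarz_pick0: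
  assumes holg: "g holomorphic_on ball 0 1" and le: "\<And>z. z \<in> ball 0 1 \<Longrightarrow> norm (g z) \<le> 1"
  shows "norm (deriv g 0) \<le> 1 - (norm (g 0))^2"
proof (cases "norm (g 0) = 1")
  case True
  have "g constant_on ball 0 1"
    by (rule Schwarz2[OF holg, of 1 0]) (use le True in \<open>auto simp: dist_norm\<close>)
  then obtain c where c: "\<And>z. z \<in> ball 0 1 \<Longrightarrow> g z = c" by (auto simp: constant_on_def)
  have "deriv g 0 = deriv (\<lambda>_. c) 0"
    by (rule deriv_cong_ev) (auto intro!: eventually_nhds_in_open[of "ball 0 1" 0, THEN eventually_mono] simp: c)
  then show ?thesis using True by simp
next
  case False
  define a where "a = g 0"
  have a1: "norm a < 1" using le[of 0] False a_def by force
  have lt: "norm (g z) < 1" if z: "z \<in> ball 0 1" for z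
  proof (rule ccontr)
    assume "\<not> norm (g z) < 1"
    then have gz: "norm (g z) = 1" using le[OF z] by simp
    have "g constant_on ball 0 1"
    proof (rule Schwarz2[OF holg, of "1 - norm z" z])
      show "0 < 1 - norm z" using z by simp
      show "ball z (1 - norm z) \<subseteq> ball 0 1" using z
        by (auto simp: dist_norm) (smt (verit) norm_minus_commute norm_triangle_ineq2)
    next
      fix y assume "norm (z - y) < 1 - norm z"
      then have "y \<in> ball 0 1" using norm_triangle_ineq4[of z "z - y"]
        by (simp add: dist_norm)
      then show "norm (g y) \<le> norm (g z)" using le gz by simp
    qed
    then obtain c where c: "\<And>z. z \<in> ball 0 1 \<Longrightarrow> g z = c" by (auto simp: constant_on_def)
    then have "g 0 = g z" using z by simp
    then show False using gz a1 a_def by simp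
  qed
  have den: "1 - cnj a * g z \<noteq> 0" if "z \<in> ball 0 1" for z
  proof -
    have "norm (cnj a * g z) < 1" using a1 lt[OF that]
      using mult_left_le[of "norm (g z)" "norm a"] by (simp add: norm_mult)
    then show ?thesis by auto
  qed
  define h where "h = (\<lambda>z. (g z - a) / (1 - cnj a * g z))"
  have holh: "h holomorphic_on ball 0 1"
    unfolding h_def using holg den by (intro holomorphic_intros) auto
  have h0: "h 0 = 0" by (simp add: h_def a_def)
  have hlt: "norm (h z) < 1" if "norm z < 1" for z
    using Moebius_function_norm_lt_1[OF a1 lt, of z 0] that
    by (simp add: Moebius_function_simple h_def)
  have dh: "norm (deriv h 0) \<le> 1"
    using Schwarz_Lemma(2)[OF holh h0 hlt, of 0] by simp
  have dg: "(g has_field_derivative deriv g 0) (at 0)"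
    using holg by (intro holomorphic_derivI[of _ "ball 0 1"]) auto
  have d0: "1 - cnj a * a \<noteq> 0" using den[of 0] a_def by simp
  have D1: "((\<lambda>z. g z - a) has_field_derivative deriv g 0) (at 0)"
    using DERIV_diff[OF dg DERIV_const[of a]] by simp
  have D2: "((\<lambda>z. 1 - cnj a * g z) has_field_derivative - (cnj a * deriv g 0)) (at 0)"
    using DERIV_diff[OF DERIV_const[of 1] DERIV_cmult[OF dg, of "cnj a"]] by simp
  have "(h has_field_derivative ((deriv g 0 * (1 - cnj a * g 0) - (g 0 - a) * (- (cnj a * deriv g 0))) / ((1 - cnj a * g 0) * (1 - cnj a * g 0)))) (at 0)"
    unfolding h_def by (rule DERIV_divide[OF D1 D2]) (use d0 a_def in simp)
  then have "(h has_field_derivative deriv g 0 / (1 - cnj a * a)) (at 0)"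
    using d0 by (simp add: a_def)
  then have "deriv h 0 = deriv g 0 / (1 - cnj a * a)"
    by (rule DERIV_imp_deriv)
  moreover have "cnj a * a = of_real ((norm a)^2)"
    using complex_norm_square[of a] by (simp add: mult.commute)
  ultimately have "deriv g 0 = deriv h 0 * of_real (1 - (norm a)^2)"
    using d0 by (simp add: field_simps)
  then have "norm (deriv g 0) = norm (deriv h 0) * norm (complex_of_real (1 - (norm a)^2))"
    by (simp only: norm_mult)
  moreover have "(norm a)^2 \<le> 1" using a1 by (simp add: power_le_one)
  ultimately have "norm (deriv g 0) = norm (deriv h 0) * (1 - (norm a)^2)"
    by (simp only: norm_of_real)
  also have "\<dots> \<le> 1 - (norm a)^2"
    using dh a1 by (simp add: mult_left_le_one_le abs_square_less_1 power_le_one)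
  finally show ?thesis by (simp add: a_def)
qed


lemma zmul_deriv:
  assumes holg: "g holomorphic_on ball 0 1" and holF: "F holomorphic_on ball 0 1"
    and F: "\<And>z. z \<in> ball 0 1 \<Longrightarrow> F z = z * g z"
  shows "(deriv^^(Suc n)) F 0 = of_nat (Suc n) * (deriv^^n) g 0"
proof -
  have hz: "(\<lambda>z. z * g z) holomorphic_on ball 0 1" using holg by (intro holomorphic_intros)
  have "(deriv^^(Suc n)) F 0 = (deriv^^(Suc n)) (\<lambda>z. z * g z) 0"
    by (rule higher_deriv_transform_within_open[OF holF hz]) (auto simp: F)
  also have "\<dots> = (\<Sum>i = 0..Suc n. of_nat (Suc n choose i) * (deriv ^^ i) (\<lambda>w. w) 0 * (deriv ^^ (Suc n - i)) g 0)"
    by (rule higher_deriv_mult[OF holomorphic_on_ident holg]) auto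
  also have "\<dots> = (\<Sum>i = 0..Suc n. (if i = 1 then of_nat (Suc n) * (deriv^^n) g 0 else 0))"
    by (rule sum.cong) auto
  also have "\<dots> = of_nat (Suc n) * (deriv^^n) g 0"
    by (simp add: sum.delta)
  finally show ?thesis .
qed

lemma carath:
  assumes holp: "p holomorphic_on ball 0 1" and re: "\<And>z. z \<in> ball 0 1 \<Longrightarrow> Re (p z) > 0"
    and p0: "p 0 = 1"
  shows "\<exists>c1 c2. deriv p 0 = 2*c1 \<and> (deriv^^2) p 0 = 4*c2 + 4*c1^2 \<and> norm c2 \<le> 1 - (norm c1)^2"
proof -
  have nz: "p z + 1 \<noteq> 0" if "z \<in> ball 0 1" for z
  proof -
    have "Re (p z + 1) > 0" using re[OF that] by simp
    then show ?thesis by (metis less_irrefl zero_complex.sel(1))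
  qed
  define w where "w z = (p z - 1) / (p z + 1)" for z
  have holw: "w holomorphic_on ball 0 1"
    unfolding w_def using holp nz by (intro holomorphic_intros) auto
  have w0: "w 0 = 0" by (simp add: w_def p0)
  have wlt: "norm (w z) < 1" if "norm z < 1" for z
  proof -
    have z: "z \<in> ball 0 1" using that by simp
    have "(norm (p z - 1))^2 < (norm (p z + 1))^2"
      using re[OF z] by (simp only: cmod_power2) (simp add: power2_eq_square algebra_simps)
    then have "norm (p z - 1) < norm (p z + 1)"
      by (rule power_less_imp_less_base) simp
    then show ?thesis using nz[OF z] by (simp add: w_def norm_divide divide_less_eq)
  qed
  obtain g where holg: "g holomorphic_on ball 0 1" and wz: "\<And>z. norm z < 1 \<Longrightarrow> w z = z * g z"
    and dw0: "deriv w 0 = g 0"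
    using Schwarz3[OF holw w0] by metis
  have gle: "norm (g z) \<le> 1" if z: "z \<in> ball 0 1" for z
  proof (cases "z = 0")
    case True
    then show ?thesis using Schwarz_Lemma(2)[OF holw w0 wlt, of 0] dw0 by simp
  next
    case False
    have "norm (w z) \<le> norm z" using Schwarz_Lemma(1)[OF holw w0 wlt, of z] z by simp
    then have "norm z * norm (g z) \<le> norm z * 1" using wz[of z] z by (simp add: norm_mult)
    then show ?thesis using False by (simp add: mult_le_cancel_left)
  qed
  have SP: "norm (deriv g 0) \<le> 1 - (norm (g 0))^2"
    by (rule schwarz_pick0[OF holg gle])
  have d2w: "(deriv^^2) w 0 = 2 * deriv g 0"
    using zmul_deriv[OF holg holw, of 1] wz by (simp add: numeral_2_eq_2)
  have hp1: "(\<lambda>z. p z + 1) holomorphic_on ball 0 1" using holp by (intro holomorphic_intros)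
  have hwp: "(\<lambda>z. w z * (p z + 1)) holomorphic_on ball 0 1" using holw holp by (intro holomorphic_intros)
  have hpm: "(\<lambda>z. p z - 1) holomorphic_on ball 0 1" using holp by (intro holomorphic_intros)
  have HD: "(deriv^^k) (\<lambda>z. p z + 1) 0 = (deriv^^k) p 0 + (if k = 0 then 1 else 0)" for k
    using higher_deriv_add[OF holp holomorphic_on_const open_ball, of 0 k 1] by simp
  have HM: "(deriv^^k) (\<lambda>z. p z - 1) 0 = (deriv^^k) p 0 - (if k = 0 then 1 else 0)" for k
    using higher_deriv_diff[OF holp holomorphic_on_const open_ball, of 0 k 1] by simp
  have EQ: "(deriv^^k) p 0 = (\<Sum>i = 0..k. of_nat (k choose i) * (deriv ^^ i) w 0 * (deriv ^^ (k - i)) (\<lambda>z. p z + 1) 0)"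
    if "k > 0" for k
  proof -
    have "(deriv^^k) p 0 = (deriv^^k) (\<lambda>z. p z - 1) 0" using HM[of k] that by simp
    also have "\<dots> = (deriv^^k) (\<lambda>z. w z * (p z + 1)) 0"
      by (rule higher_deriv_transform_within_open[OF hpm hwp]) (auto simp: w_def nz)
    also have "\<dots> = (\<Sum>i = 0..k. of_nat (k choose i) * (deriv ^^ i) w 0 * (deriv ^^ (k - i)) (\<lambda>z. p z + 1) 0)"
      by (rule higher_deriv_mult[OF holw hp1]) auto
    finally show ?thesis .
  qed
  have E1: "deriv p 0 = 2 * g 0"
    using EQ[of 1] HD[of 1] HD[of 0] w0 dw0 p0 by simp
  have E2: "(deriv^^2) p 0 = 4 * deriv g 0 + 4 * (g 0)^2"
    using EQ[of 2] HD[of 2] HD[of 1] HD[of 0] w0 dw0 p0 d2w E1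
    by (simp add: numeral_2_eq_2 power2_eq_square)
  show ?thesis using E1 E2 SP by blast
qed


lemma coeff_rel:
  assumes fA: "f \<in> A_beta \<beta>"
  shows "\<exists>p. p holomorphic_on ball 0 1 \<and> (\<forall>z\<in>ball 0 1. Re (p z) > 0) \<and> p 0 = 1 \<and>
     (\<forall>z\<in>ball 0 1 - {0}. p z = of_real \<beta> * f z / z + of_real (1-\<beta>) * deriv f z) \<and>
     deriv p 0 = (2 - of_real \<beta>) * taylor_coeff f 2 \<and>
     (deriv^^2) p 0 = 2 * (3 - 2 * of_real \<beta>) * taylor_coeff f 3"
proof -
  have holf: "f holomorphic_on ball 0 1" and f0: "f 0 = 0" and df0: "deriv f 0 = 1"
    and pos: "\<And>z. z \<in> ball 0 1 - {0} \<Longrightarrow> Re (of_real \<beta> * f z / z + of_real (1 - \<beta>) * deriv f z) > 0"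
    using fA by (auto simp: A_beta_def)
  obtain q where holq: "q holomorphic_on ball 0 1" and fq: "\<And>z. norm z < 1 \<Longrightarrow> f z = z * q z"
    and dq: "deriv f 0 = q 0"
    using Schwarz3[OF holf f0] by metis
  have holdf: "deriv f holomorphic_on ball 0 1" by (rule holomorphic_deriv[OF holf open_ball])
  define p where "p z = of_real \<beta> * q z + of_real (1-\<beta>) * deriv f z" for z
  have holp: "p holomorphic_on ball 0 1" unfolding p_def using holq holdf holf by (intro holomorphic_intros) auto
  have pz: "p z = of_real \<beta> * f z / z + of_real (1-\<beta>) * deriv f z" if "z \<in> ball 0 1 - {0}" for z
    using that fq[of z] by (simp add: p_def)
  have p0: "p 0 = 1" using dq df0 by (simp add: p_def algebra_simps)
  have rep: "Re (p z) > 0" if "z \<in> ball 0 1" for z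
  proof (cases "z = 0")
    case True then show ?thesis using p0 by simp
  next
    case False then show ?thesis using pos[of z] pz[of z] that by simp
  qed
  have hq: "(\<lambda>z. of_real \<beta> * q z) holomorphic_on ball 0 1" using holq by (intro holomorphic_intros)
  have hd: "(\<lambda>z. of_real (1-\<beta>) * deriv f z) holomorphic_on ball 0 1" using holdf holf by (intro holomorphic_intros) auto
  have HP: "(deriv^^k) p 0 = of_real \<beta> * (deriv^^k) q 0 + of_real (1-\<beta>) * (deriv^^(Suc k)) f 0" for k
  proof -
    have "(deriv^^k) p 0 = (deriv^^k) (\<lambda>z. of_real \<beta> * q z) 0 + (deriv^^k) (\<lambda>z. of_real (1-\<beta>) * deriv f z) 0"
      unfolding p_def by (rule higher_deriv_add[OF hq hd]) auto
    also have "\<dots> = of_real \<beta> * (deriv^^k) q 0 + of_real (1-\<beta>) * (deriv^^k) (deriv f) 0"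
      using higher_deriv_cmult[OF holq, of 0 k "of_real \<beta>"] higher_deriv_cmult[OF holdf, of 0 k "of_real (1-\<beta>)"]
      by simp
    also have "(deriv^^k) (deriv f) = (deriv^^(Suc k)) f" by (simp add: funpow_Suc_right del: funpow.simps)
    finally show ?thesis .
  qed
  have ZF: "(deriv^^(Suc k)) f 0 = of_nat (Suc k) * (deriv^^k) q 0" for k
    by (rule zmul_deriv[OF holq holf]) (simp add: fq)
  have t2: "taylor_coeff f 2 = deriv q 0"
    using ZF[of 1] by (simp add: taylor_coeff_def numeral_2_eq_2)
  have t3: "taylor_coeff f 3 = (deriv^^2) q 0 / 2"
    using ZF[of 2] by (simp add: taylor_coeff_def numeral_3_eq_3 fact_numeral)
  have d1: "deriv p 0 = (2 - of_real \<beta>) * taylor_coeff f 2"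
    using HP[of 1] ZF[of 1] t2 by (simp add: numeral_2_eq_2 algebra_simps)
  have d2: "(deriv^^2) p 0 = 2 * (3 - 2 * of_real \<beta>) * taylor_coeff f 3"
  proof -
    have "(deriv^^2) p 0 = of_real \<beta> * (deriv^^2) q 0 + of_real (1-\<beta>) * (of_nat (Suc 2) * (deriv^^2) q 0)"
      by (simp only: HP[of 2] ZF[of 2])
    moreover have "(deriv^^2) q 0 = 2 * taylor_coeff f 3" by (simp add: t3)
    ultimately show ?thesis by (simp add: algebra_simps)
  qed
  show ?thesis using holp rep p0 pz d1 d2 by blast
qed

lemma final_ineq:
  fixes \<beta> :: real and a2 a3 c1 c2 :: complex
  assumes b0: "0 \<le> \<beta>" and b1: "\<beta> \<le> 1"
    and e1: "(2 - of_real \<beta>) * a2 = 2 * c1"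
    and e2: "2 * (3 - 2 * of_real \<beta>) * a3 = 4 * c2 + 4 * c1^2"
    and c: "norm c2 \<le> 1 - (norm c1)^2"
  shows "norm (a3 - a2^2) \<le> 2 / (3 - 2 * \<beta>)"
proof -
  define B where "B = 3 - 2 * \<beta>"
  define C where "C = 2 - \<beta>"
  define k where "k = 2 * B / C^2 - 1"
  have B: "B > 0" and C: "C > 0" using b1 by (auto simp: B_def C_def)
  have C2: "C^2 > 0" using C by simp
  have "C^2 \<le> 2*B" using b0 b1 mult_le_one[of \<beta> \<beta>]
    by (simp add: B_def C_def power2_eq_square algebra_simps)
  then have "1 \<le> 2*B/C^2" using C2 by (simp add: le_divide_eq)
  then have k0: "k \<ge> 0" by (simp add: k_def)
  have sq: "(1-\<beta>)^2 \<ge> 0" by simp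
  have "B \<le> C^2" using sq by (simp add: B_def C_def power2_eq_square algebra_simps)
  then have "2*B/C^2 \<le> 2" using C2 by (simp add: divide_le_eq)
  then have k1: "k \<le> 1" by (simp add: k_def)
  have Cc: "(of_real C::complex) \<noteq> 0" and Bc: "(of_real B::complex) \<noteq> 0" using B C by auto
  have e1': "of_real C * a2 = 2 * c1" using e1 by (simp add: C_def)
  have "2 * (of_real B * a3) = 2 * (2 * (c2 + c1^2))" using e2 by (simp add: B_def algebra_simps)
  then have e2': "of_real B * a3 = 2 * (c2 + c1^2)" by (metis mult_cancel_left zero_neq_numeral)
  have a2: "a2 = 2 * c1 / of_real C" using e1' Cc by (simp add: field_simps)
  have a3: "a3 = 2 * (c2 + c1^2) / of_real B" using e2' Bc by (simp add: field_simps)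
  have eq: "a3 - a2^2 = of_real (2 / B) * (c2 - of_real k * c1^2)"
    using B C by (simp add: a2 a3 k_def field_simps power2_eq_square)
  have "norm (c2 - of_real k * c1^2) \<le> norm c2 + k * (norm c1)^2"
    using norm_triangle_ineq4[of c2 "of_real k * c1^2"] k0 by (simp add: norm_mult norm_power)
  also have "\<dots> \<le> 1"
    using c k1 mult_right_mono[OF k1, of "(norm c1)^2"] by simp
  finally have n1: "norm (c2 - of_real k * c1^2) \<le> 1" .
  have "norm (a3 - a2^2) = (2 / B) * norm (c2 - of_real k * c1^2)"
    using B by (simp only: eq norm_mult norm_of_real) simp
  also have "\<dots> \<le> 2 / B" using mult_left_mono[OF n1, of "2/B"] B by simp
  finally show ?thesis by (simp add: B_def)
qed



lemma re_P_pos: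
  fixes u :: complex assumes "norm u < 1"
  shows "Re ((1 + u) / (1 - u)) > 0"
proof -
  have u1: "u \<noteq> 1" using assms by auto
  have num: "Re (1 + u) * Re (1 - u) + Im (1 + u) * Im (1 - u) = 1 - (norm u)^2"
    using cmod_power2[of u] by (simp add: algebra_simps power2_eq_square)
  have "(norm u)^2 < 1" using assms by (simp add: abs_square_less_1)
  then have n: "Re (1 + u) * Re (1 - u) + Im (1 + u) * Im (1 - u) > 0" using num by simp
  have d: "(Re (1 - u))\<^sup>2 + (Im (1 - u))\<^sup>2 > 0"
  proof -
    have "norm (1 - u) > 0" using u1 by simp
    then have "(norm (1 - u))^2 > 0" by simp
    then show ?thesis by (simp only: cmod_power2)
  qed
  show ?thesis unfolding Re_divide using n d by simp
qed

lemma exists_f2: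
  fixes \<beta> :: real
  assumes b0: "0 \<le> \<beta>" and b1: "\<beta> \<le> 1"
  shows "\<exists>f2\<in>A_beta \<beta>. (\<forall>z\<in>ball 0 1 - {0}. of_real \<beta> * f2 z / z + of_real (1 - \<beta>) * deriv f2 z
                                  = (1 + z\<^sup>2) / (1 - z\<^sup>2))"
proof -
  define \<gamma> where "\<gamma> = 1 - \<beta>"
  have g0: "\<gamma> \<ge> 0" using b1 by (simp add: \<gamma>_def)
  define e :: "nat \<Rightarrow> complex" where "e n = of_real (if n = 0 then 1 else 2 / (1 + 2 * real n * \<gamma>))" for n
  have ebound: "norm (e n) \<le> 2" for n
  proof (cases "n = 0")
    case False
    have "0 \<le> 2 * real n * \<gamma>" using g0 by simp
    then have "1 \<le> 1 + 2 * real n * \<gamma>" and ps: "0 < 1 + 2 * real n * \<gamma>" by linarith+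
    then have "2 / (1 + 2 * real n * \<gamma>) \<le> 2" using divide_left_mono[of 1 "1 + 2 * real n * \<gamma>" 2] ps by simp
    moreover have "2 / (1 + 2 * real n * \<gamma>) \<ge> 0" using \<open>1 \<le> 1 + 2 * real n * \<gamma>\<close> by (intro divide_nonneg_nonneg) auto
    moreover have "norm (e n) = abs (2 / (1 + 2 * real n * \<gamma>))"
      by (simp only: e_def if_not_P[OF False] norm_of_real)
    ultimately show ?thesis by simp
  qed (simp add: e_def)
  have summ: "summable (\<lambda>n. e n * u^n)" if "norm u < 1" for u
  proof (rule summable_comparison_test)
    show "\<exists>N. \<forall>n\<ge>N. norm (e n * u^n) \<le> 2 * norm u ^ n"
      using ebound by (auto simp: norm_mult norm_power intro!: mult_right_mono)
    show "summable (\<lambda>n. 2 * norm u ^ n)" using that by (simp add: summable_geometric)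
  qed
  define \<psi> where "\<psi> u = (\<Sum>n. e n * u^n)" for u
  define \<psi>' where "\<psi>' u = (\<Sum>n. diffs e n * u^n)" for u
  have D\<psi>: "(\<psi> has_field_derivative \<psi>' u) (at u)" if "norm u < 1" for u
    unfolding \<psi>_def[abs_def] \<psi>'_def by (rule termdiffs_strong'[of 1]) (use summ that in auto)
  have summ': "summable (\<lambda>n. diffs e n * u^n)" if "norm u < 1" for u
    by (rule termdiff_converges[of u 1]) (use summ that in auto)
  have ID: "\<psi> u + 2 * of_real \<gamma> * u * \<psi>' u = (1 + u) / (1 - u)" if u: "norm u < 1" for u
  proof -
    have S1: "(\<lambda>n. e n * u^n) sums \<psi> u" unfolding \<psi>_def using summ[OF u] by (simp add: summable_sums)
    have S2: "(\<lambda>n. diffs e n * u^n) sums \<psi>' u" unfolding \<psi>'_def using summ'[OF u] by (simp add: summable_sums)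
    define h where "h m = of_nat m * e m * u^m" for m
    have "(\<lambda>n. u * (diffs e n * u^n)) sums (u * \<psi>' u)" by (rule sums_mult[OF S2])
    then have "(\<lambda>n. h (Suc n)) sums (u * \<psi>' u)" by (simp add: h_def diffs_def algebra_simps)
    then have S3: "h sums (u * \<psi>' u)" using sums_Suc_iff[of h] by (simp add: h_def)
    have S4: "(\<lambda>n. e n * u^n + 2 * of_real \<gamma> * h n) sums (\<psi> u + 2 * of_real \<gamma> * (u * \<psi>' u))"
      by (intro sums_add S1 sums_mult S3)
    have c: "e n * u^n + 2 * of_real \<gamma> * h n = 2 * u^n - (if n = 0 then 1 else 0)" for n
    proof (cases "n = 0")
      case True then show ?thesis by (simp add: e_def h_def)
    next
      case False
      have pos: "1 + 2 * real n * \<gamma> > 0" using g0 by (simp add: add_pos_nonneg)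
      have "e n * (1 + 2 * of_real \<gamma> * of_nat n) = of_real (2 / (1 + 2 * real n * \<gamma>) * (1 + 2 * real n * \<gamma>))"
        using False by (simp add: e_def algebra_simps)
      also have "\<dots> = 2"
      proof -
        have r: "2 / (1 + 2 * real n * \<gamma>) * (1 + 2 * real n * \<gamma>) = (2::real)" using pos by (simp add: field_simps)
        show ?thesis by (simp only: r of_real_numeral)
      qed
      finally have "e n * (1 + 2 * of_real \<gamma> * of_nat n) = 2" .
      moreover have "e n * u^n + 2 * of_real \<gamma> * h n = u^n * (e n * (1 + 2 * of_real \<gamma> * of_nat n))"
        by (simp add: h_def algebra_simps)
      ultimately have "e n * u^n + 2 * of_real \<gamma> * h n = 2 * u^n" by simp
      then show ?thesis using False by simp
    qed
    have S5: "(\<lambda>n. 2 * u^n - (if n = 0 then 1 else 0)) sums (2 * (1 / (1 - u)) - 1)"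
    proof (intro sums_diff sums_mult)
      show "(\<lambda>n. u^n) sums (1 / (1 - u))" using geometric_sums[of u] u by simp
      show "(\<lambda>n. if n = 0 then 1 else 0 :: complex) sums 1" using sums_single[of 0 "\<lambda>_. 1::complex"] by simp
    qed
    have "\<psi> u + 2 * of_real \<gamma> * (u * \<psi>' u) = 2 * (1 / (1 - u)) - 1"
      using sums_unique2[OF S4 S5[folded c]] .
    moreover have "u \<noteq> 1" using u by auto
    then have "2 * (1 / (1 - u)) - 1 = (1 + u) / (1 - u)" by (simp add: field_simps)
    moreover have "\<psi> u + 2 * of_real \<gamma> * u * \<psi>' u = \<psi> u + 2 * of_real \<gamma> * (u * \<psi>' u)"
      by (simp only: mult.assoc)
    ultimately show ?thesis by simp
  qed
  define f2 where "f2 z = z * \<psi> (z^2)" for z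
  have Df2: "(f2 has_field_derivative \<psi> (z^2) + z * (\<psi>' (z^2) * (2 * z))) (at z)" if z: "norm z < 1" for z
  proof -
    have z2: "norm (z^2) < 1" using z by (simp add: norm_power abs_square_less_1)
    have "((\<lambda>z. \<psi> (z^2)) has_field_derivative \<psi>' (z^2) * (2 * z)) (at z)"
    proof -
      have dz2: "((\<lambda>z. z^2) has_field_derivative 2 * z) (at z)"
        using DERIV_power[OF DERIV_ident, of 2 z UNIV] by simp
      show ?thesis using DERIV_chain2[OF D\<psi>[OF z2] dz2] by simp
    qed
    then have "((\<lambda>z. z * \<psi> (z^2)) has_field_derivative z * (\<psi>' (z^2) * (2 * z)) + 1 * \<psi> (z^2)) (at z)"
      by (rule DERIV_mult'[OF DERIV_ident])
    then show ?thesis unfolding f2_def[abs_def] by (simp add: add.commute)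
  qed
  have holf2: "f2 holomorphic_on ball 0 1"
    unfolding holomorphic_on_open[OF open_ball]
  proof
    fix x :: complex assume "x \<in> ball 0 1"
    then have "norm x < 1" by simp
    then show "\<exists>f'. (f2 has_field_derivative f') (at x)" using Df2 by blast
  qed
  have df2: "deriv f2 z = \<psi> (z^2) + 2 * z^2 * \<psi>' (z^2)" if "norm z < 1" for z
    using DERIV_imp_deriv[OF Df2[OF that]] by (simp add: power2_eq_square algebra_simps)
  have \<psi>0: "\<psi> 0 = 1" by (simp add: \<psi>_def e_def)
  have ode: "of_real \<beta> * f2 z / z + of_real (1 - \<beta>) * deriv f2 z = (1 + z\<^sup>2) / (1 - z\<^sup>2)"
    if z: "z \<in> ball 0 1 - {0}" for z
  proof -
    have z1: "norm z < 1" and nz: "z \<noteq> 0" using z by auto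
    have z2: "norm (z^2) < 1" using z1 by (simp add: norm_power abs_square_less_1)
    have "of_real \<beta> * f2 z / z + of_real (1 - \<beta>) * deriv f2 z
          = \<psi> (z^2) + 2 * of_real \<gamma> * z^2 * \<psi>' (z^2)"
      using nz by (simp add: df2[OF z1] f2_def \<gamma>_def algebra_simps)
    also have "\<dots> = (1 + z\<^sup>2) / (1 - z\<^sup>2)" using ID[OF z2] by simp
    finally show ?thesis .
  qed
  have f2A: "f2 \<in> A_beta \<beta>"
    unfolding A_beta_def
  proof (intro CollectI conjI holf2 ballI)
    show "f2 0 = 0" by (simp add: f2_def)
    show "deriv f2 0 = 1" using df2[of 0] \<psi>0 by simp
  next
    fix z :: complex assume z: "z \<in> ball 0 1 - {0}"
    have "norm (z^2) < 1" using z by (simp add: norm_power abs_square_less_1)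
    then show "Re (of_real \<beta> * f2 z / z + of_real (1 - \<beta>) * deriv f2 z) > 0"
      using ode[OF z] re_P_pos by simp
  qed
  show ?thesis
  proof (rule bexI[OF _ f2A])
    show "\<forall>z\<in>ball 0 1 - {0}. of_real \<beta> * f2 z / z + of_real (1 - \<beta>) * deriv f2 z = (1 + z\<^sup>2) / (1 - z\<^sup>2)"
      using ode by blast
  qed
qed



lemma P_derivs:
  defines "P \<equiv> (\<lambda>z::complex. (1 + z\<^sup>2) / (1 - z\<^sup>2))"
  shows "P holomorphic_on ball 0 1" and "deriv P 0 = 0" and "(deriv^^2) P 0 = 4"
proof -
  have nz: "1 - z\<^sup>2 \<noteq> 0" if "z \<in> ball 0 1" for z :: complex
  proof
    assume "1 - z\<^sup>2 = 0"
    then have "z\<^sup>2 = 1" by simp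
    then have "norm (z\<^sup>2) = 1" by simp
    moreover have "norm (z\<^sup>2) < 1" using that by (simp add: norm_power abs_square_less_1)
    ultimately show False by simp
  qed
  show holP: "P holomorphic_on ball 0 1" unfolding P_def using nz by (intro holomorphic_intros) auto
  define Q where "Q z = 4 * z / ((1 - z\<^sup>2) * (1 - z\<^sup>2))" for z :: complex
  have DP: "(P has_field_derivative Q z) (at z)" if z: "z \<in> ball 0 1" for z
  proof -
    have d1: "((\<lambda>z. 1 + z\<^sup>2) has_field_derivative 2 * z) (at z)"
      using DERIV_add[OF DERIV_const[of 1] DERIV_power[OF DERIV_ident, of 2 z UNIV]] by simp
    have d2: "((\<lambda>z. 1 - z\<^sup>2) has_field_derivative - (2 * z)) (at z)"
      using DERIV_diff[OF DERIV_const[of 1] DERIV_power[OF DERIV_ident, of 2 z UNIV]] by simp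
    have "(P has_field_derivative ((2 * z) * (1 - z\<^sup>2) - (1 + z\<^sup>2) * (- (2 * z))) / ((1 - z\<^sup>2) * (1 - z\<^sup>2))) (at z)"
      unfolding P_def by (rule DERIV_divide[OF d1 d2 nz[OF z]])
    moreover have "(2 * z) * (1 - z\<^sup>2) - (1 + z\<^sup>2) * (- (2 * z)) = 4 * z"
      by (simp add: algebra_simps)
    ultimately show ?thesis by (simp add: Q_def)
  qed
  have dP: "deriv P z = Q z" if "z \<in> ball 0 1" for z
    by (rule DERIV_imp_deriv[OF DP[OF that]])
  show "deriv P 0 = 0" using dP[of 0] by (simp add: Q_def)
  have "deriv (deriv P) 0 = deriv Q 0"
    by (rule deriv_cong_ev) (auto intro!: eventually_nhds_in_open[of "ball 0 1" 0, THEN eventually_mono] simp: dP)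
  also have "deriv Q 0 = 4"
  proof (rule DERIV_imp_deriv)
    have d4: "((\<lambda>z. 4 * z) has_field_derivative 4) (at (0::complex))"
      using DERIV_cmult[OF DERIV_ident, of 4 0 UNIV] by simp
    have d2: "((\<lambda>z. 1 - z\<^sup>2) has_field_derivative - (2 * z)) (at z)" for z :: complex
      using DERIV_diff[OF DERIV_const[of 1] DERIV_power[OF DERIV_ident, of 2 z UNIV]] by simp
    have dd: "((\<lambda>z. (1 - z\<^sup>2) * (1 - z\<^sup>2)) has_field_derivative 0) (at (0::complex))"
      using DERIV_mult[OF d2[of 0] d2[of 0]] by simp
    have "(Q has_field_derivative (4 * ((1 - 0\<^sup>2) * (1 - 0\<^sup>2)) - (4 * 0) * 0) / (((1 - 0\<^sup>2) * (1 - 0\<^sup>2)) * ((1 - 0\<^sup>2) * (1 - 0\<^sup>2)))) (at 0)"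
      unfolding Q_def[abs_def] by (rule DERIV_divide[OF d4 dd]) simp
    then show "(Q has_field_derivative 4) (at 0)" by simp
  qed
  finally show "(deriv^^2) P 0 = 4" by (simp add: numeral_2_eq_2)
qed

theorem mainTheorem6:
  fixes \<beta> :: real
  assumes "0 \<le> \<beta>" and "\<beta> \<le> 1"
  shows "(\<forall>f\<in>A_beta \<beta>.
            norm (taylor_coeff f 3 - (taylor_coeff f 2)\<^sup>2) \<le> 2 / (3 - 2 * \<beta>))
       \<and> (\<exists>f2\<in>A_beta \<beta>.
            (\<forall>z\<in>ball 0 1 - {0}. of_real \<beta> * f2 z / z + of_real (1 - \<beta>) * deriv f2 z
                                  = (1 + z\<^sup>2) / (1 - z\<^sup>2)))
       \<and> (\<forall>f2\<in>A_beta \<beta>.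
            (\<forall>z\<in>ball 0 1 - {0}. of_real \<beta> * f2 z / z + of_real (1 - \<beta>) * deriv f2 z
                                  = (1 + z\<^sup>2) / (1 - z\<^sup>2))
            \<longrightarrow> norm (taylor_coeff f2 3 - (taylor_coeff f2 2)\<^sup>2) = 2 / (3 - 2 * \<beta>))"
proof (intro conjI ballI impI)
  fix f assume fA: "f \<in> A_beta \<beta>"
  obtain p where holp: "p holomorphic_on ball 0 1" and rep: "\<forall>z\<in>ball 0 1. Re (p z) > 0"
    and p0: "p 0 = 1"
    and d1: "deriv p 0 = (2 - of_real \<beta>) * taylor_coeff f 2"
    and d2: "(deriv^^2) p 0 = 2 * (3 - 2 * of_real \<beta>) * taylor_coeff f 3"
    using coeff_rel[OF fA] by blast
  obtain c1 c2 where e1: "deriv p 0 = 2*c1" and e2: "(deriv^^2) p 0 = 4*c2 + 4*c1^2"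
    and c: "norm c2 \<le> 1 - (norm c1)^2"
    using carath[OF holp _ p0] rep by blast
  show "norm (taylor_coeff f 3 - (taylor_coeff f 2)\<^sup>2) \<le> 2 / (3 - 2 * \<beta>)"
    by (rule final_ineq[OF assms _ _ c]) (use d1 d2 e1 e2 in auto)
next
  show "\<exists>f2\<in>A_beta \<beta>. (\<forall>z\<in>ball 0 1 - {0}. of_real \<beta> * f2 z / z + of_real (1 - \<beta>) * deriv f2 z
                                  = (1 + z\<^sup>2) / (1 - z\<^sup>2))"
    by (rule exists_f2[OF assms])
next
  fix f assume fA: "f \<in> A_beta \<beta>"
    and ode: "\<forall>z\<in>ball 0 1 - {0}. of_real \<beta> * f z / z + of_real (1 - \<beta>) * deriv f z = (1 + z\<^sup>2) / (1 - z\<^sup>2)"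
  define P where "P = (\<lambda>z::complex. (1 + z\<^sup>2) / (1 - z\<^sup>2))"
  obtain p where holp: "p holomorphic_on ball 0 1"
    and p0: "p 0 = 1"
    and pz: "\<forall>z\<in>ball 0 1 - {0}. p z = of_real \<beta> * f z / z + of_real (1-\<beta>) * deriv f z"
    and d1: "deriv p 0 = (2 - of_real \<beta>) * taylor_coeff f 2"
    and d2: "(deriv^^2) p 0 = 2 * (3 - 2 * of_real \<beta>) * taylor_coeff f 3"
    using coeff_rel[OF fA] by blast
  have holP: "P holomorphic_on ball 0 1" and dP1: "deriv P 0 = 0" and dP2: "(deriv^^2) P 0 = 4"
    using P_derivs unfolding P_def by auto
  have pP: "p z = P z" if "z \<in> ball 0 1" for z
  proof (cases "z = 0")
    case True then show ?thesis using p0 by (simp add: P_def)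
  next
    case False then show ?thesis using pz ode that by (simp add: P_def)
  qed
  have HD: "(deriv^^k) p 0 = (deriv^^k) P 0" for k
    by (rule higher_deriv_transform_within_open[OF holp holP]) (auto simp: pP)
  have "deriv p 0 = 0" using HD[of 1] dP1 by simp
  moreover have "(2 - complex_of_real \<beta>) \<noteq> 0"
  proof
    assume "2 - complex_of_real \<beta> = 0"
    then have "Re (2 - complex_of_real \<beta>) = 0" by simp
    then show False using assms by simp
  qed
  ultimately have a2: "taylor_coeff f 2 = 0" using d1 by simp
  have B: "3 - 2 * \<beta> > 0" using assms by simp
  have X: "2 * (3 - 2 * of_real \<beta>) * taylor_coeff f 3 = 4" using HD[of 2] dP2 d2 by simp
  have "2 * ((3 - 2 * of_real \<beta>) * taylor_coeff f 3) = 2 * 2"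
    by (simp only: mult.assoc[symmetric] X) simp
  then have "(3 - 2 * of_real \<beta>) * taylor_coeff f 3 = 2" by (metis mult_cancel_left zero_neq_numeral)
  moreover define b where "b = (of_real (3 - 2 * \<beta>) :: complex)"
  ultimately have "b * taylor_coeff f 3 = 2" by (simp add: b_def)
  moreover have bnz: "b \<noteq> 0" using B unfolding b_def of_real_eq_0_iff by simp
  ultimately have a3: "taylor_coeff f 3 = 2 / b" by (simp add: eq_divide_eq mult.commute)
  have nb: "norm b = 3 - 2 * \<beta>" using B unfolding b_def norm_of_real by simp
  have "norm (taylor_coeff f 3 - (taylor_coeff f 2)\<^sup>2) = norm (2 / b)" by (simp add: a2 a3)
  also have "\<dots> = 2 / (3 - 2 * \<beta>)" unfolding norm_divide nb by simp
  finally show "norm (taylor_coeff f 3 - (taylor_coeff f 2)\<^sup>2) = 2 / (3 - 2 * \<beta>)" .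
qed

end
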